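(* Let $n\ge1$, let $U_1,\dots,U_n$ be independent Uniform$[0,1]$ random variables, and let $N_t=|\{i:U_i\le t\}|$ for $t\in[0,1]$. Let $t_0=n^{-1/2}$. Then for every real $x$, $$\mathbb P\left[\sup_{t\in[t_0,1]}\frac{N_t}{1+nt}\ge x\right]\le\exp\!\left(1-n^{1/4}(x-1)\right).$$ *)

theory Defs
  imports "HOL-Probability.Probability"
begin

end

theory Submission
  imports Defs
begin

lemma convex_step:
  fixes s S lam :: real
  assumes "0 < s" "s \<le> S" "0 \<le> lam"
  shows "S * exp (lam / S) \<le> s * exp (lam / s) + (S - s)"
proof -
  have S0: "0 < S" using assms by linarith
  define t where "t = s / S"
  have t0: "0 \<le> t" "t \<le> 1" using assms S0 by (auto simp: t_def divide_simps)
  have "exp ((1 - t) *\<^sub>R 0 + t *\<^sub>R (lam / s)) \<le> (1 - t) * exp 0 + t * exp (lam / s)"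
    using convex_onD[OF exp_convex, of t 0 "lam / s"] t0 by auto
  moreover have "(1 - t) *\<^sub>R 0 + t *\<^sub>R (lam / s) = lam / S"
    using assms S0 by (simp add: t_def)
  ultimately have "exp (lam / S) \<le> (1 - t) + t * exp (lam / s)" by simp
  hence "S * exp (lam / S) \<le> S * ((1 - t) + t * exp (lam / s))"
    using S0 by (simp add: mult_left_mono)
  also have "\<dots> = s * exp (lam / s) + (S - s)"
    using S0 by (simp add: t_def algebra_simps)
  finally show ?thesis .
qed

definition phi :: "real \<Rightarrow> (nat \<Rightarrow> real) \<Rightarrow> nat \<Rightarrow> nat \<Rightarrow> real" where
  "phi lam g j k = (if k \<le> j then exp (lam / g j) else 1)"

definition ZZ :: "real \<Rightarrow> (nat \<Rightarrow> real) \<Rightarrow> nat \<Rightarrow> nat \<Rightarrow> (nat \<Rightarrow> nat) \<Rightarrow> real" where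
  "ZZ lam g n j v = (\<Prod>i<n. phi lam g j (v i))"

definition ww :: "(nat \<Rightarrow> real) \<Rightarrow> nat \<Rightarrow> (nat \<Rightarrow> nat) \<Rightarrow> real" where
  "ww p n v = (\<Prod>i<n. p (v i))"

definition VV :: "nat \<Rightarrow> nat \<Rightarrow> (nat \<Rightarrow> nat) set" where
  "VV n K = PiE {..<n} (\<lambda>_. {..Suc K})"

definition AA where
  "AA lam g n K c m = {v \<in> VV n K. \<exists>k. m \<le> k \<and> k \<le> K \<and> c \<le> ZZ lam g n k v}"

lemma finite_VV: "finite (VV n K)"
  unfolding VV_def by (intro finite_PiE) auto

lemma group_fiber:
  fixes h :: "nat \<Rightarrow> real" and cl :: "nat \<Rightarrow> nat"
  assumes cl: "\<And>k. k \<le> Suc K \<Longrightarrow> cl k \<le> Suc K"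
  shows "(\<Sum>v\<in>{v\<in>VV n K. P (restrict (\<lambda>i. cl (v i)) {..<n})}. \<Prod>i<n. h (v i))
       = (\<Sum>u\<in>{u\<in>VV n K. P u}. \<Prod>i<n. \<Sum>k\<in>{k\<in>{..Suc K}. cl k = u i}. h k)"
proof -
  let ?rc = "\<lambda>v. restrict (\<lambda>i. cl (v i)) {..<n}"
  let ?S = "{v\<in>VV n K. P (?rc v)}"
  let ?T = "{u\<in>VV n K. P u}"
  have img: "?rc ` ?S \<subseteq> ?T"
    using cl by (auto simp: VV_def PiE_iff)
  have "(\<Sum>v\<in>?S. \<Prod>i<n. h (v i)) = (\<Sum>u\<in>?T. \<Sum>v\<in>{v. v \<in> ?S \<and> ?rc v = u}. \<Prod>i<n. h (v i))"
    by (rule sum.group[symmetric]) (use img finite_VV in auto)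
  also have "\<dots> = (\<Sum>u\<in>?T. \<Prod>i<n. \<Sum>k\<in>{k\<in>{..Suc K}. cl k = u i}. h k)"
  proof (rule sum.cong[OF refl])
    fix u assume u: "u \<in> ?T"
    have "{v. v \<in> ?S \<and> ?rc v = u} = PiE {..<n} (\<lambda>i. {k\<in>{..Suc K}. cl k = u i})"
    proof (intro set_eqI iffI)
      fix v assume "v \<in> {v. v \<in> ?S \<and> ?rc v = u}"
      then show "v \<in> PiE {..<n} (\<lambda>i. {k\<in>{..Suc K}. cl k = u i})"
        by (auto simp: VV_def PiE_iff restrict_def fun_eq_iff split: if_splits)
    next
      fix v assume v: "v \<in> PiE {..<n} (\<lambda>i. {k\<in>{..Suc K}. cl k = u i})"
      have "?rc v = u"
        using v u by (auto simp: VV_def PiE_iff restrict_def fun_eq_iff extensional_def)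
      then show "v \<in> {v. v \<in> ?S \<and> ?rc v = u}"
        using v u by (auto simp: VV_def PiE_iff)
    qed
    then show "(\<Sum>v\<in>{v. v \<in> ?S \<and> ?rc v = u}. \<Prod>i<n. h (v i)) = (\<Prod>i<n. \<Sum>k\<in>{k\<in>{..Suc K}. cl k = u i}. h k)"
      by (simp add: prod_sum_PiE)
  qed
  finally show ?thesis .
qed

lemma key_level:
  fixes p g :: "nat \<Rightarrow> real"
  assumes p0: "\<And>k. 0 \<le> p k"
    and G: "\<And>j. j \<le> K \<Longrightarrow> (\<Sum>k\<le>j. p k) = g j"
    and gpos: "\<And>j. j \<le> K \<Longrightarrow> 0 < g j"
    and mK: "m < K" and lam: "0 \<le> lam"
  shows "(\<Sum>v\<in>{v\<in>VV n K. P (restrict (\<lambda>i. max (v i) (Suc m)) {..<n})}. ww p n v * ZZ lam g n (Suc m) v)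
       \<le> (\<Sum>v\<in>{v\<in>VV n K. P (restrict (\<lambda>i. max (v i) (Suc m)) {..<n})}. ww p n v * ZZ lam g n m v)"
proof -
  let ?cl = "\<lambda>k. max k (Suc m)"
  have cl: "\<And>k. k \<le> Suc K \<Longrightarrow> ?cl k \<le> Suc K" using mK by auto
  have eq: "\<And>j. ww p n v * ZZ lam g n j v = (\<Prod>i<n. p (v i) * phi lam g j (v i))" for v
    by (simp add: ww_def ZZ_def prod.distrib)
  have fib: "(\<Sum>k\<in>{k\<in>{..Suc K}. ?cl k = u}. p k * phi lam g (Suc m) k)
           \<le> (\<Sum>k\<in>{k\<in>{..Suc K}. ?cl k = u}. p k * phi lam g m k)" for u
  proof (cases "u = Suc m")
    case True
    have set: "{k\<in>{..Suc K}. ?cl k = u} = {..Suc m}" using True mK by auto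
    have gm: "0 < g m" "g m \<le> g (Suc m)" "g (Suc m) = g m + p (Suc m)"
      using gpos[of m] mK G[of m] G[of "Suc m"] p0[of "Suc m"] by auto
    have "(\<Sum>k\<le>Suc m. p k * phi lam g (Suc m) k) = (\<Sum>k\<le>Suc m. p k * exp (lam / g (Suc m)))"
      by (intro sum.cong) (auto simp: phi_def)
    also have "\<dots> = (\<Sum>k\<le>Suc m. p k) * exp (lam / g (Suc m))"
      by (rule sum_distrib_right[symmetric])
    also have "\<dots> = g (Suc m) * exp (lam / g (Suc m))"
      using G[of "Suc m"] mK by simp
    also have "\<dots> \<le> g m * exp (lam / g m) + (g (Suc m) - g m)"
      by (rule convex_step) (use gm lam in auto)
    also have "\<dots> = (\<Sum>k\<le>m. p k) * exp (lam / g m) + p (Suc m)"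
      using G[of m] mK gm by simp
    also have "\<dots> = (\<Sum>k\<le>m. p k * exp (lam / g m)) + p (Suc m)"
      by (simp add: sum_distrib_right)
    also have "\<dots> = (\<Sum>k\<le>m. p k * phi lam g m k) + p (Suc m) * phi lam g m (Suc m)"
      by (simp add: phi_def)
    also have "\<dots> = (\<Sum>k\<le>Suc m. p k * phi lam g m k)"
      by simp
    finally show ?thesis using set by simp
  next
    case False
    have "k \<in> {k\<in>{..Suc K}. ?cl k = u} \<Longrightarrow> phi lam g (Suc m) k = phi lam g m k" for k
      using False by (auto simp: phi_def max_def split: if_splits)
    then show ?thesis by (intro eq_refl sum.cong) auto
  qed
  have "(\<Sum>v\<in>{v\<in>VV n K. P (restrict (\<lambda>i. ?cl (v i)) {..<n})}. ww p n v * ZZ lam g n (Suc m) v)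
      = (\<Sum>u\<in>{u\<in>VV n K. P u}. \<Prod>i<n. \<Sum>k\<in>{k\<in>{..Suc K}. ?cl k = u i}. p k * phi lam g (Suc m) k)"
    unfolding eq by (rule group_fiber[OF cl])
  also have "\<dots> \<le> (\<Sum>u\<in>{u\<in>VV n K. P u}. \<Prod>i<n. \<Sum>k\<in>{k\<in>{..Suc K}. ?cl k = u i}. p k * phi lam g m k)"
    by (intro sum_mono prod_mono conjI fib sum_nonneg mult_nonneg_nonneg p0) (auto simp: phi_def)
  also have "\<dots> = (\<Sum>v\<in>{v\<in>VV n K. P (restrict (\<lambda>i. ?cl (v i)) {..<n})}. ww p n v * ZZ lam g n m v)"
    unfolding eq by (rule group_fiber[OF cl, symmetric])
  finally show ?thesis .
qed

lemma ww_nonneg: "(\<And>k. 0 \<le> p k) \<Longrightarrow> 0 \<le> ww p n v"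
  unfolding ww_def by (intro prod_nonneg) auto

lemma ZZ_restrict:
  assumes "Suc m \<le> k"
  shows "ZZ lam g n k (restrict (\<lambda>i. max (v i) (Suc m)) {..<n}) = ZZ lam g n k v"
  unfolding ZZ_def using assms by (intro prod.cong) (auto simp: phi_def)

lemma doob:
  fixes p g :: "nat \<Rightarrow> real"
  assumes p0: "\<And>k. 0 \<le> p k"
    and G: "\<And>j. j \<le> K \<Longrightarrow> (\<Sum>k\<le>j. p k) = g j"
    and gpos: "\<And>j. j \<le> K \<Longrightarrow> 0 < g j"
    and lam: "0 \<le> lam" and mK: "m \<le> K"
  shows "c * (\<Sum>v\<in>AA lam g n K c m. ww p n v) \<le> (\<Sum>v\<in>AA lam g n K c m. ww p n v * ZZ lam g n m v)"
  using mK
proof (induction m rule: inc_induct)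
  case base
  have "c * (\<Sum>v\<in>AA lam g n K c K. ww p n v) = (\<Sum>v\<in>AA lam g n K c K. ww p n v * c)"
    by (simp add: sum_distrib_left mult.commute)
  also have "\<dots> \<le> (\<Sum>v\<in>AA lam g n K c K. ww p n v * ZZ lam g n K v)"
    by (intro sum_mono mult_left_mono ww_nonneg p0) (auto simp: AA_def)
  finally show ?case .
next
  case (step m)
  let ?A = "AA lam g n K c"
  define D where "D = {v\<in>VV n K. c \<le> ZZ lam g n m v \<and> v \<notin> ?A (Suc m)}"
  have split: "?A m = ?A (Suc m) \<union> D"
  proof (intro set_eqI iffI)
    fix v assume "v \<in> ?A m"
    then obtain k where k: "v \<in> VV n K" "m \<le> k" "k \<le> K" "c \<le> ZZ lam g n k v"
      unfolding AA_def by blast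
    show "v \<in> ?A (Suc m) \<union> D"
    proof (cases "k = m")
      case True then show ?thesis using k unfolding D_def by auto
    next
      case False then have "Suc m \<le> k" using k by simp
      then show ?thesis using k unfolding AA_def by blast
    qed
  next
    fix v assume "v \<in> ?A (Suc m) \<union> D"
    then show "v \<in> ?A m"
    proof
      assume "v \<in> ?A (Suc m)"
      then obtain k where k: "v \<in> VV n K" "Suc m \<le> k" "k \<le> K" "c \<le> ZZ lam g n k v"
        unfolding AA_def by blast
      then show ?thesis unfolding AA_def by (intro CollectI conjI exI[of _ k]) auto
    next
      assume "v \<in> D"
      then show ?thesis using step.hyps(2) unfolding D_def AA_def
        by (intro CollectI conjI exI[of _ m]) auto
    qed
  qed
  have disj: "?A (Suc m) \<inter> D = {}" by (auto simp: D_def)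
  have fin: "finite (?A (Suc m))" "finite D"
    using finite_VV by (auto simp: AA_def D_def)
  define Pr where "Pr u = (\<exists>k. Suc m \<le> k \<and> k \<le> K \<and> c \<le> ZZ lam g n k u)" for u
  have Aform: "?A (Suc m) = {v\<in>VV n K. Pr (restrict (\<lambda>i. max (v i) (Suc m)) {..<n})}"
    unfolding AA_def Pr_def using ZZ_restrict by auto
  have K1: "(\<Sum>v\<in>?A (Suc m). ww p n v * ZZ lam g n (Suc m) v) \<le> (\<Sum>v\<in>?A (Suc m). ww p n v * ZZ lam g n m v)"
    unfolding Aform by (rule key_level[OF p0 G gpos]) (use step lam in auto)
  have K2: "c * (\<Sum>v\<in>D. ww p n v) \<le> (\<Sum>v\<in>D. ww p n v * ZZ lam g n m v)"
  proof -
    have "c * (\<Sum>v\<in>D. ww p n v) = (\<Sum>v\<in>D. ww p n v * c)"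
      by (simp add: sum_distrib_left mult.commute)
    also have "\<dots> \<le> (\<Sum>v\<in>D. ww p n v * ZZ lam g n m v)"
      by (intro sum_mono mult_left_mono ww_nonneg p0) (auto simp: D_def)
    finally show ?thesis .
  qed
  have "c * (\<Sum>v\<in>?A m. ww p n v) = c * (\<Sum>v\<in>?A (Suc m). ww p n v) + c * (\<Sum>v\<in>D. ww p n v)"
    unfolding split by (simp add: sum.union_disjoint[OF fin disj] distrib_left)
  also have "\<dots> \<le> (\<Sum>v\<in>?A (Suc m). ww p n v * ZZ lam g n m v) + (\<Sum>v\<in>D. ww p n v * ZZ lam g n m v)"
    using step.IH K1 K2 by linarith
  also have "\<dots> = (\<Sum>v\<in>?A m. ww p n v * ZZ lam g n m v)"
    unfolding split by (simp add: sum.union_disjoint[OF fin disj])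
  finally show ?case .
qed

lemma doob_final:
  fixes p g :: "nat \<Rightarrow> real"
  assumes p0: "\<And>k. 0 \<le> p k"
    and G: "\<And>j. j \<le> K \<Longrightarrow> (\<Sum>k\<le>j. p k) = g j"
    and G1: "(\<Sum>k\<le>Suc K. p k) = 1"
    and gpos: "\<And>j. j \<le> K \<Longrightarrow> 0 < g j"
    and lam: "0 \<le> lam"
  shows "c * (\<Sum>v\<in>AA lam g n K c 0. ww p n v) \<le> (g 0 * exp (lam / g 0) + (1 - g 0)) ^ n"
proof -
  have "c * (\<Sum>v\<in>AA lam g n K c 0. ww p n v) \<le> (\<Sum>v\<in>AA lam g n K c 0. ww p n v * ZZ lam g n 0 v)"
    by (rule doob[OF p0 G gpos lam]) auto
  also have "\<dots> \<le> (\<Sum>v\<in>VV n K. ww p n v * ZZ lam g n 0 v)"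
    by (intro sum_mono2 finite_VV mult_nonneg_nonneg ww_nonneg p0)
       (auto simp: AA_def ZZ_def phi_def intro!: prod_nonneg)
  also have "\<dots> = (\<Sum>v\<in>VV n K. \<Prod>i<n. p (v i) * phi lam g 0 (v i))"
    by (simp add: ww_def ZZ_def prod.distrib)
  also have "\<dots> = (\<Prod>i<n. \<Sum>k\<le>Suc K. p k * phi lam g 0 k)"
    unfolding VV_def by (rule prod_sum_PiE[symmetric]) auto
  also have "\<dots> = (g 0 * exp (lam / g 0) + (1 - g 0)) ^ n"
  proof -
    have "(\<Sum>k\<le>Suc K. p k * phi lam g 0 k) = p 0 * exp (lam / g 0) + (\<Sum>k\<le>K. p (Suc k))"
      by (subst sum.atMost_Suc_shift) (simp add: phi_def)
    also have "(\<Sum>k\<le>K. p (Suc k)) = 1 - p 0"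
      using G1 by (subst (asm) sum.atMost_Suc_shift) simp
    finally show ?thesis using G[of 0] by simp
  qed
  finally show ?thesis .
qed



lemma uniform_atMost:
  fixes y :: real
  assumes "0 \<le> y" "y \<le> 1"
  shows "measure (uniform_measure lborel {0..1}) {..y} = y"
proof -
  have "{0..1} \<inter> {..y} = {0..y::real}" using assms by auto
  then have "emeasure (uniform_measure lborel {0..1::real}) {..y} = ennreal y"
    using assms by (simp add: divide_ennreal_def)
  then show ?thesis using assms by (simp add: measure_def)
qed

lemma prob_Q: "prob_space (uniform_measure lborel {0..1::real})"
  by (rule prob_space_uniform_measure) auto

lemma numeric:
  fixes n :: nat and x :: real
  assumes n1: "1 \<le> n"
  defines "a \<equiv> real n powr (1/4)" and "t0 \<equiv> 1 / sqrt (real n)"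
  defines "lam \<equiv> t0 / a"
  shows "(t0 * exp (lam / t0) + (1 - t0)) ^ n / exp (lam * x * real n) \<le> exp (1 - a * (x - 1))"
proof -
  have nr: "1 \<le> real n" using n1 by simp
  have a1: "1 \<le> a" unfolding a_def using nr by (simp add: ge_one_powr_ge_zero)
  have aa: "a * a = sqrt (real n)"
    unfolding a_def by (simp add: powr_add[symmetric] powr_half_sqrt)
  have sq: "sqrt (real n) * sqrt (real n) = real n" by simp
  have sq1: "1 \<le> sqrt (real n)" using nr by simp
  have nt0: "real n * t0 = a * a" unfolding t0_def aa using sq sq1
    by (metis div_self mult.commute mult_1_left nonzero_mult_div_cancel_left not_one_le_zero times_divide_eq_left)
  have t0p: "0 < t0" "t0 \<le> 1" unfolding t0_def using sq1 by auto
  have lt: "lam / t0 = 1 / a" unfolding lam_def using t0p a1 by simp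
  define y where "y = exp (1 / a) - 1"
  have y0: "0 \<le> y" unfolding y_def using a1 by simp
  have yb: "y \<le> 1 / a + (1 / a)^2"
    unfolding y_def using exp_bound[of "1/a"] a1 by simp
  have base: "t0 * exp (lam / t0) + (1 - t0) = 1 + t0 * y" unfolding lt y_def by (simp add: algebra_simps)
  have b0: "0 \<le> 1 + t0 * y" using t0p y0 by simp
  have "(1 + t0 * y) ^ n \<le> exp (t0 * y) ^ n"
    by (intro power_mono b0) (use exp_ge_add_one_self[of "t0 * y"] in \<open>simp add: add.commute\<close>)
  also have "\<dots> = exp (real n * (t0 * y))" by (simp add: exp_of_nat_mult)
  also have "real n * (t0 * y) = a * a * y" using nt0 by (simp add: mult.assoc[symmetric])
  finally have num: "(t0 * exp (lam / t0) + (1 - t0)) ^ n \<le> exp (a * a * y)" unfolding base .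
  have "a * a * y \<le> a * a * (1 / a + (1/a)^2)" using yb a1 by (intro mult_left_mono) auto
  also have "\<dots> = a + 1" using a1 by (simp add: field_simps power2_eq_square)
  finally have e1: "a * a * y \<le> a + 1" .
  have e2: "lam * x * real n = a * x"
  proof -
    have "lam * x * real n = (real n * t0) * x / a" unfolding lam_def by (simp add: field_simps)
    also have "\<dots> = a * x" unfolding nt0 using a1 by simp
    finally show ?thesis .
  qed
  have "(t0 * exp (lam / t0) + (1 - t0)) ^ n / exp (lam * x * real n) \<le> exp (a * a * y) / exp (a * x)"
    unfolding e2 by (intro divide_right_mono num) simp
  also have "\<dots> = exp (a * a * y - a * x)" by (simp add: exp_diff)
  also have "\<dots> \<le> exp (1 - a * (x - 1))" using e1 by (simp add: algebra_simps)
  finally show ?thesis .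
qed

theorem lemmaC3:
  fixes M :: "'a measure" and U :: "nat \<Rightarrow> 'a \<Rightarrow> real" and n :: nat and x :: real
  assumes "prob_space M"
    and "n \<ge> 1"
    and "prob_space.indep_vars M (\<lambda>_. borel) U {..<n}"
    and "\<And>i. i < n \<Longrightarrow> distr M borel (U i) = uniform_measure lborel {0..1}"
  shows "measure M {\<omega> \<in> space M.
           (SUP t\<in>{1 / sqrt (real n)..1}. real (card {i. i < n \<and> U i \<omega> \<le> t}) / (1 + real n * t)) \<ge> x}
         \<le> exp (1 - real n powr (1/4) * (x - 1))"
proof -
  interpret P: prob_space M by fact
  define a where "a = real n powr (1/4)"
  have nr: "1 \<le> real n" using assms(2) by simp
  have a1: "1 \<le> a" unfolding a_def using nr by (simp add: ge_one_powr_ge_zero)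
  define S' where "S' = {\<omega> \<in> space M.
           (SUP t\<in>{1 / sqrt (real n)..1}. real (card {i. i < n \<and> U i \<omega> \<le> t}) / (1 + real n * t)) \<ge> x}"
  show ?thesis
  proof (cases "x \<le> 1")
    case True
    have "a * (x - 1) \<le> 0" using True a1 by (intro mult_nonneg_nonpos) auto
    then have "0 \<le> 1 - a * (x - 1)" by simp
    then have "1 \<le> exp (1 - a * (x - 1))" by simp
    moreover have "measure M S' \<le> 1" by (rule P.prob_le_1)
    ultimately show ?thesis unfolding S'_def a_def by linarith
  next
    case False
    then have x1: "1 < x" by simp
    define t0 where "t0 = 1 / sqrt (real n)"
    define lam where "lam = t0 / a"
    define K where "K = 2 * n"
    define h where "h = (1 - t0) / real K"
    define g where "g j = t0 + real j * h" for j :: nat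
    define \<beta> where "\<beta> u = card {j\<in>{..K}. g j < u}" for u :: real
    have sq1: "1 \<le> sqrt (real n)" using nr by simp
    have t0: "0 < t0" "t0 \<le> 1" unfolding t0_def using sq1 by auto
    have Kpos: "0 < K" "real K = 2 * real n" using assms(2) by (auto simp: K_def)
    have h0: "0 \<le> h" unfolding h_def using t0 Kpos by simp
    have hn: "real n * h \<le> 1 / 2"
    proof -
      have "real n * h = (1 - t0) / 2" unfolding h_def using Kpos nr by (simp add: field_simps)
      then show ?thesis using t0 by simp
    qed
    have gK: "g K = 1" unfolding g_def h_def using Kpos by simp
    have gmono: "g i \<le> g j" if "i \<le> j" for i j
      unfolding g_def using that h0 by (simp add: mult_right_mono)
    have gpos: "0 < g j" for j unfolding g_def using t0 h0 by (simp add: add_pos_nonneg)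
    have gle1: "g j \<le> 1" if "j \<le> K" for j using gmono[OF that] gK by simp
    have g0: "g 0 = t0" unfolding g_def by simp
    have gSuc: "g (Suc j) = g j + h" for j unfolding g_def by (simp add: algebra_simps)
    have \<beta>le: "\<beta> u \<le> j \<longleftrightarrow> u \<le> g j" if "j \<le> K" for u j
    proof
      assume "\<beta> u \<le> j"
      show "u \<le> g j"
      proof (rule ccontr)
        assume "\<not> u \<le> g j"
        then have "{..j} \<subseteq> {j'\<in>{..K}. g j' < u}" using gmono that by fastforce
        then have "card {..j} \<le> \<beta> u" unfolding \<beta>_def by (intro card_mono) auto
        then show False using \<open>\<beta> u \<le> j\<close> by simp
      qed
    next
      assume "u \<le> g j"
      then have "{j'\<in>{..K}. g j' < u} \<subseteq> {..<j}" using gmono by (fastforce simp: not_less[symmetric])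
      then have "\<beta> u \<le> card {..<j}" unfolding \<beta>_def by (intro card_mono) auto
      then show "\<beta> u \<le> j" by simp
    qed
    have \<beta>bound: "\<beta> u \<le> Suc K" for u
    proof -
      have "\<beta> u \<le> card {..K}" unfolding \<beta>_def by (intro card_mono) auto
      then show ?thesis by simp
    qed
    define Q where "Q = uniform_measure lborel {0..1::real}"
    interpret Q: prob_space Q unfolding Q_def by (rule prob_Q)
    have spQ: "space Q = UNIV" unfolding Q_def by simp
    have setsQ: "sets Q = sets borel" unfolding Q_def by simp
    have le_sets: "{u. \<beta> u \<le> k} \<in> sets borel" for k
    proof (cases "k \<le> K")
      case True
      then have "{u. \<beta> u \<le> k} = {..g k}" using \<beta>le by auto
      then show ?thesis by simp
    next
      case False
      then have "{u. \<beta> u \<le> k} = UNIV" using \<beta>bound by (metis (mono_tags) UNIV_eq_I mem_Collect_eq not_less_eq_eq order_trans)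
      then show ?thesis by simp
    qed
    have eq_sets: "\<beta> -` {k} \<in> sets borel" for k
    proof (cases k)
      case 0
      then have "\<beta> -` {k} = {u. \<beta> u \<le> 0}" by auto
      then show ?thesis using le_sets[of 0] by simp
    next
      case (Suc k')
      then have "\<beta> -` {k} = {u. \<beta> u \<le> Suc k'} - {u. \<beta> u \<le> k'}" by auto
      then show ?thesis using le_sets by auto
    qed
    define p where "p k = measure Q (\<beta> -` {k})" for k
    have p0: "0 \<le> p k" for k unfolding p_def by simp
    have psum: "(\<Sum>k\<le>j. p k) = measure Q {u. \<beta> u \<le> j}" for j
    proof (induction j)
      case 0
      then show ?case by (simp add: p_def vimage_def)
    next
      case (Suc j)
      have "{u. \<beta> u \<le> Suc j} = {u. \<beta> u \<le> j} \<union> \<beta> -` {Suc j}" by auto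
      then have "measure Q {u. \<beta> u \<le> Suc j} = measure Q {u. \<beta> u \<le> j} + measure Q (\<beta> -` {Suc j})"
        using le_sets[of j] eq_sets[of "Suc j"] by (simp add: Q.finite_measure_Union setsQ disjoint_iff)
      then show ?case using Suc by (simp add: p_def)
    qed
    have G: "(\<Sum>k\<le>j. p k) = g j" if "j \<le> K" for j
    proof -
      have "{u. \<beta> u \<le> j} = {..g j}" using \<beta>le that by auto
      then show ?thesis unfolding psum Q_def using uniform_atMost[of "g j"] gpos[of j] gle1[OF that] by simp
    qed
    have G1: "(\<Sum>k\<le>Suc K. p k) = 1"
    proof -
      have "{u. \<beta> u \<le> Suc K} = space Q" using \<beta>bound spQ by auto
      then show ?thesis unfolding psum by (simp add: Q.prob_space)
    qed
    have rv: "U i \<in> borel_measurable M" if "i < n" for i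
      using assms(3) that unfolding P.indep_vars_def2 by auto
    have indep: "P.indep_sets (\<lambda>i. {U i -` A \<inter> space M | A. A \<in> sets borel}) {..<n}"
      using assms(3) unfolding P.indep_vars_def2 by auto
    have pU: "P.prob (U i -` (\<beta> -` {k}) \<inter> space M) = p k" if "i < n" for i k
    proof -
      have "P.prob (U i -` (\<beta> -` {k}) \<inter> space M) = measure (distr M borel (U i)) (\<beta> -` {k})"
        using rv[OF that] eq_sets by (simp add: measure_distr)
      then show ?thesis using assms(4)[OF that] by (simp add: p_def Q_def)
    qed
    define Ev where "Ev v = (\<Inter>i\<in>{..<n}. U i -` (\<beta> -` {v i}) \<inter> space M)" for v :: "nat \<Rightarrow> nat"
    have "0 \<in> {..<n}" using assms(2) by simp
    then have ne: "{..<n} \<noteq> {}" by blast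
    have Ev_sets: "Ev v \<in> sets M" for v
      unfolding Ev_def using ne rv eq_sets
      by (intro sets.finite_INT) (auto intro: measurable_sets)
    have Ev_prob: "P.prob (Ev v) = ww p n v" for v
    proof -
      have "P.prob (Ev v) = (\<Prod>i\<in>{..<n}. P.prob (U i -` (\<beta> -` {v i}) \<inter> space M))"
        unfolding Ev_def using ne eq_sets
        by (intro P.indep_setsD[OF indep]) auto
      then show ?thesis unfolding ww_def using pU by simp
    qed
    have ap: "0 < a" using a1 by simp
    have lam0: "0 < lam" unfolding lam_def using t0 ap by simp
    define c where "c = exp (lam * x * real n)"
    have c0: "0 < c" unfolding c_def by simp
    have incl: "S' \<subseteq> (\<Union>v\<in>AA lam g n K c 0. Ev v)"
    proof
      fix \<omega> assume \<omega>: "\<omega> \<in> S'"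
      define N where "N t = card {i. i < n \<and> U i \<omega> \<le> t}" for t
      have \<omega>M: "\<omega> \<in> space M" using \<omega> unfolding S'_def by simp
      have sup: "x \<le> (SUP t\<in>{t0..1}. real (N t) / (1 + real n * t))"
        using \<omega> unfolding S'_def N_def t0_def by simp
      have Nle: "N t \<le> n" for t
      proof -
        have "N t \<le> card {..<n}" unfolding N_def by (intro card_mono) auto
        then show ?thesis by simp
      qed
      have bdd: "bdd_above ((\<lambda>t. real (N t) / (1 + real n * t)) ` {t0..1})"
      proof (rule bdd_aboveI2)
        fix t assume t: "t \<in> {t0..1}"
        then have "1 \<le> 1 + real n * t" using t0 by simp
        then have "real (N t) / (1 + real n * t) \<le> real (N t) / 1"
          by (intro divide_left_mono) auto
        also have "\<dots> \<le> real n" using Nle[of t] by simp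
        finally show "real (N t) / (1 + real n * t) \<le> real n" .
      qed
      define \<epsilon> where "\<epsilon> = x / (4 * (1 + real n))"
      have \<epsilon>0: "0 < \<epsilon>" unfolding \<epsilon>_def using x1 by simp
      have ne1: "{t0..1} \<noteq> {}" using t0 by simp
      have "x - \<epsilon> < (SUP t\<in>{t0..1}. real (N t) / (1 + real n * t))" using sup \<epsilon>0 by simp
      then obtain t where t: "t \<in> {t0..1}" "x - \<epsilon> < real (N t) / (1 + real n * t)"
        using less_cSUP_iff[OF ne1 bdd] by blast
      define k where "k = \<beta> t"
      have kK: "k \<le> K" unfolding k_def using \<beta>le[of K t] t gK by simp
      have tk: "t \<le> g k" using \<beta>le[OF kK, of t] unfolding k_def by simp
      have gk: "g k \<le> t + h"
      proof (cases k)
        case 0 then show ?thesis using t g0 h0 by simp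
      next
        case (Suc k')
        then have "\<not> \<beta> t \<le> k'" unfolding k_def by simp
        then have "\<not> t \<le> g k'" using \<beta>le[of k' t] kK Suc by simp
        then show ?thesis using Suc gSuc by simp
      qed
      have NN: "N t \<le> N (g k)" unfolding N_def using tk by (intro card_mono) auto
      have den: "0 < 1 + real n * t" using t t0 by (simp add: add_pos_nonneg)
      have h1: "(x - \<epsilon>) * (1 + real n * t) < real (N t)" using t(2) den by (simp add: less_divide_eq)
      have h2: "x * real n * g k \<le> (x - \<epsilon>) * (1 + real n * t)"
      proof -
        have "x * real n * g k \<le> x * real n * (t + h)"
          using gk x1 by (intro mult_left_mono) auto
        also have "\<dots> = x * real n * t + x * (real n * h)" by (simp add: algebra_simps)
        also have "\<dots> \<le> x * real n * t + x * (1/2)"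
          using hn x1 by (intro add_left_mono mult_left_mono) auto
        finally have A: "x * real n * g k \<le> x * real n * t + x / 2" by simp
        have "\<epsilon> * (1 + real n * t) \<le> \<epsilon> * (1 + real n)"
          using \<epsilon>0 t mult_left_mono[of t 1 "real n"] by (intro mult_left_mono) auto
        also have "\<dots> = x / 4" unfolding \<epsilon>_def using nr by (simp add: field_simps)
        finally have B: "\<epsilon> * (1 + real n * t) \<le> x / 4" .
        have "(x - \<epsilon>) * (1 + real n * t) = x + x * real n * t - \<epsilon> * (1 + real n * t)"
          by (simp add: algebra_simps)
        then show ?thesis using A B x1 by linarith
      qed
      have Ngk: "x * real n * g k < real (N (g k))" using h1 h2 NN by linarith
      define v where "v = restrict (\<lambda>i. \<beta> (U i \<omega>)) {..<n}"
      have vV: "v \<in> VV n K" unfolding v_def VV_def using \<beta>bound by auto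
      have cardeq: "{..<n} \<inter> {i. v i \<le> k} = {i. i < n \<and> U i \<omega> \<le> g k}"
        unfolding v_def using \<beta>le[OF kK] by auto
      have Zk: "ZZ lam g n k v = exp (lam / g k) ^ N (g k)"
      proof -
        have "ZZ lam g n k v = (\<Prod>i<n. if v i \<le> k then exp (lam / g k) else 1)"
          unfolding ZZ_def phi_def by simp
        also have "\<dots> = exp (lam / g k) ^ card ({..<n} \<inter> {i. v i \<le> k})"
          by (simp add: prod.If_cases)
        finally show ?thesis unfolding cardeq N_def .
      qed
      have "lam * x * real n \<le> real (N (g k)) * (lam / g k)"
      proof -
        have "lam * x * real n = (x * real n * g k) * (lam / g k)" using gpos[of k] by simp
        also have "\<dots> \<le> real (N (g k)) * (lam / g k)"
          using Ngk lam0 gpos[of k] by (intro mult_right_mono) auto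
        finally show ?thesis .
      qed
      then have "c \<le> ZZ lam g n k v" unfolding Zk c_def by (simp add: exp_of_nat_mult[symmetric])
      then have "v \<in> AA lam g n K c 0" unfolding AA_def using vV kK by auto
      moreover have "\<omega> \<in> Ev v" unfolding Ev_def v_def using \<omega>M by auto
      ultimately show "\<omega> \<in> (\<Union>v\<in>AA lam g n K c 0. Ev v)" by blast
    qed
    have finA: "finite (AA lam g n K c 0)"
      using finite_VV by (rule finite_subset[rotated]) (auto simp: AA_def)
    have "measure M S' \<le> measure M (\<Union>v\<in>AA lam g n K c 0. Ev v)"
      by (rule P.finite_measure_mono[OF incl]) (use finA Ev_sets in auto)
    also have "\<dots> \<le> (\<Sum>v\<in>AA lam g n K c 0. measure M (Ev v))"
      by (rule measure_UNION_le[OF finA Ev_sets])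
    also have "\<dots> = (\<Sum>v\<in>AA lam g n K c 0. ww p n v)" using Ev_prob by simp
    also have "\<dots> \<le> (g 0 * exp (lam / g 0) + (1 - g 0)) ^ n / c"
      using doob_final[OF p0 G G1 gpos, of lam c n] lam0 c0 by (simp add: pos_le_divide_eq mult.commute)
    also have "\<dots> \<le> exp (1 - a * (x - 1))"
      unfolding g0 c_def lam_def t0_def a_def using numeric[OF assms(2)] by simp
    finally show ?thesis unfolding S'_def a_def t0_def .
  qed
qed

end
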